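(* For complex parameters $a,b,c,d$ such that the series on the left converges and all terms are defined, $${}_3F_2\!\left[\begin{matrix}a,\ b,\ d+2\\ c+1,\ d\end{matrix};1\right]=\frac{\Gamma(c+1)\Gamma(c-a-b)}{\Gamma(c-a+1)\Gamma(c-b+1)}\left\{(c-a-b)+\frac{2ab}{d}+\frac{ab(a+1)(b+1)}{d(d+1)(c-a-b-1)}\right\}.$$
   Context: $(a)_k=a(a+1)\cdots(a+k-1)$ is the Pochhammer symbol and ${}_3F_2\!\left[\begin{matrix}a_1,a_2,a_3\\ b_1,b_2\end{matrix};z\right]=\sum_{k\ge0}\frac{(a_1)_k(a_2)_k(a_3)_k}{(b_1)_k(b_2)_k}\frac{z^k}{k!}$. *)

theory Defs
  imports "HOL-Analysis.Analysis"
begin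

definition hyp3F2_term :: "complex \<Rightarrow> complex \<Rightarrow> complex \<Rightarrow> complex \<Rightarrow> complex \<Rightarrow> complex \<Rightarrow> nat \<Rightarrow> complex" where
  "hyp3F2_term a1 a2 a3 b1 b2 z k =
     pochhammer a1 k * pochhammer a2 k * pochhammer a3 k
       / (pochhammer b1 k * pochhammer b2 k) * z ^ k / of_nat (fact k)"

definition hyp3F2 :: "complex \<Rightarrow> complex \<Rightarrow> complex \<Rightarrow> complex \<Rightarrow> complex \<Rightarrow> complex \<Rightarrow> complex" where
  "hyp3F2 a1 a2 a3 b1 b2 z = (\<Sum>k. hyp3F2_term a1 a2 a3 b1 b2 z k)"

end

theory Submission
  imports Defs
begin


lemma abel_test:
  fixes f \<beta> :: "nat \<Rightarrow> complex"
  assumes f: "summable f" and bv: "summable (\<lambda>k. norm (\<beta> (Suc k) - \<beta> k))"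
  shows "summable (\<lambda>k. f k * \<beta> k)"
proof -
  define S where "S n = (\<Sum>k<n. f k)" for n
  have eq: "(\<Sum>k<n. f k * \<beta> k) = S n * \<beta> n - (\<Sum>k<n. S (Suc k) * (\<beta> (Suc k) - \<beta> k))" for n
    by (induction n) (simp_all add: S_def algebra_simps)
  have Sc: "S \<longlonglongrightarrow> suminf f" unfolding S_def using summable_LIMSEQ[OF f] .
  then have "Bseq S" using convergent_imp_Bseq convergentI by blast
  then obtain M where M: "M > 0" "\<And>n. norm (S n) \<le> M" by (auto simp: Bseq_def)
  have bs: "summable (\<lambda>k. \<beta> (Suc k) - \<beta> k)" using summable_norm_cancel[OF bv] .
  have "(\<lambda>n. \<beta> 0 + (\<Sum>k<n. \<beta> (Suc k) - \<beta> k)) \<longlonglongrightarrow> \<beta> 0 + suminf (\<lambda>k. \<beta> (Suc k) - \<beta> k)"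
    by (intro tendsto_intros summable_LIMSEQ[OF bs])
  then have bc: "\<beta> \<longlonglongrightarrow> \<beta> 0 + suminf (\<lambda>k. \<beta> (Suc k) - \<beta> k)"
    by (simp add: sum_lessThan_telescope)
  have s2: "summable (\<lambda>k. S (Suc k) * (\<beta> (Suc k) - \<beta> k))"
  proof (rule summable_comparison_test[OF _ summable_mult[OF bv, of M]])
    show "\<exists>N. \<forall>n\<ge>N. norm (S (Suc n) * (\<beta> (Suc n) - \<beta> n)) \<le> M * norm (\<beta> (Suc n) - \<beta> n)"
      using M by (auto simp: norm_mult intro!: mult_right_mono)
  qed
  have "(\<lambda>n. S n * \<beta> n - (\<Sum>k<n. S (Suc k) * (\<beta> (Suc k) - \<beta> k))) \<longlonglongrightarrow>
     suminf f * (\<beta> 0 + suminf (\<lambda>k. \<beta> (Suc k) - \<beta> k)) - suminf (\<lambda>k. S (Suc k) * (\<beta> (Suc k) - \<beta> k))"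
    by (intro tendsto_intros Sc bc summable_LIMSEQ[OF s2])
  then have "(\<lambda>k. f k * \<beta> k) sums (suminf f * (\<beta> 0 + suminf (\<lambda>k. \<beta> (Suc k) - \<beta> k)) - suminf (\<lambda>k. S (Suc k) * (\<beta> (Suc k) - \<beta> k)))"
    unfolding sums_def eq .
  then show ?thesis by (rule sums_summable)
qed

lemma summable_lim_zero:
  fixes f :: "nat \<Rightarrow> complex"
  assumes f: "summable f" and l: "(\<lambda>n. of_nat n * f n) \<longlonglongrightarrow> l"
  shows "l = 0"
proof (rule ccontr)
  assume l0: "l \<noteq> 0"
  define g where "g n = Re (cnj l * f n)" for n
  have gs: "summable g" unfolding g_def by (intro summable_Re summable_mult f)
  have "(\<lambda>n. Re (cnj l * (of_nat n * f n))) \<longlonglongrightarrow> Re (cnj l * l)"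
    by (intro tendsto_intros l)
  moreover have "Re (cnj l * l) = (norm l)^2" by (simp add: complex_mult_cnj cmod_def power2_eq_square)
  moreover have "(\<lambda>n. Re (cnj l * (of_nat n * f n))) = (\<lambda>n. real n * g n)"
    by (simp add: g_def fun_eq_iff distrib_left mult.left_commute)
  ultimately have lim: "(\<lambda>n. real n * g n) \<longlonglongrightarrow> (norm l)^2"
    by simp
  have pos: "(norm l)^2 / 2 < (norm l)^2" using l0 by simp
  have ev: "eventually (\<lambda>n. real n * g n > (norm l)^2 / 2) sequentially"
    using order_tendstoD(1)[OF lim pos] .
  have "summable (\<lambda>n. (norm l)^2 / 2 * (1 / real n))"
  proof (rule summable_comparison_test_ev[OF _ gs])
    show "eventually (\<lambda>n. norm ((norm l)^2 / 2 * (1 / real n)) \<le> g n) sequentially"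
      using ev eventually_gt_at_top[of "0::nat"]
    proof eventually_elim
      case (elim n)
      then have "(norm l)^2 / 2 \<le> real n * g n" by simp
      then have "(norm l)^2 / 2 / real n \<le> g n" using elim by (simp add: field_simps)
      moreover have "norm ((norm l)^2 / 2 * (1 / real n)) = (norm l)^2 / 2 / real n"
        by simp
      ultimately show ?case by simp
    qed
  qed
  then have "summable (\<lambda>n. 1 / real n)"
    using summable_cmult_iff[of "(norm l)^2 / 2" "\<lambda>n. 1 / real n"] l0 by simp
  then show False using not_summable_harmonic[where 'a=real] by (simp add: inverse_eq_divide)
qed



definition BV :: "(nat \<Rightarrow> complex) \<Rightarrow> bool" where
  "BV \<beta> \<longleftrightarrow> summable (\<lambda>k. norm (\<beta> (Suc k) - \<beta> k))"

lemma BV_add: assumes "BV f" "BV g" shows "BV (\<lambda>k. f k + g k)"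
proof -
  have "norm (norm (f (Suc n) + g (Suc n) - (f n + g n))) \<le> norm (f (Suc n) - f n) + norm (g (Suc n) - g n)" for n
  proof -
    have "f (Suc n) + g (Suc n) - (f n + g n) = (f (Suc n) - f n) + (g (Suc n) - g n)" by simp
    then show ?thesis by (metis norm_triangle_ineq real_norm_def abs_norm_cancel)
  qed
  then show ?thesis unfolding BV_def
    by (intro summable_comparison_test[OF _ summable_add[OF assms[unfolded BV_def]]]) auto
qed

lemma BV_cmult: "BV f \<Longrightarrow> BV (\<lambda>k. c * f k)"
  unfolding BV_def
  by (rule summable_comparison_test[OF _ summable_mult[of _ "norm c"]]) (auto simp: right_diff_distrib[symmetric] norm_mult)

lemma BV_shift: "BV f \<Longrightarrow> BV (\<lambda>k. f (Suc k))"
  unfolding BV_def by (subst summable_Suc_iff)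

lemma BV_inv: "BV (\<lambda>k. 1 / (z + of_nat k))"
  unfolding BV_def
proof (rule summable_comparison_test_ev[OF _ summable_mult[OF inverse_power_summable[of 2, where 'a=real], of 4]])
  obtain N :: nat where N: "real N > 2 * norm z" using reals_Archimedean2 by blast
  show "eventually (\<lambda>k. norm (norm (1 / (z + of_nat (Suc k)) - 1 / (z + of_nat k))) \<le> 4 * inverse (real k ^ 2)) sequentially"
    using eventually_ge_at_top[of "N+1"]
  proof eventually_elim
    case (elim k)
    have k: "real k \<ge> real N + 1" using elim by simp
    have n1: "norm (z + of_nat k) \<ge> real k / 2"
    proof -
      have "norm (of_nat k :: complex) \<le> norm (z + of_nat k) + norm z"
        using norm_triangle_ineq4[of "z + of_nat k" z] by simp
      then show ?thesis using N k by simp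
    qed
    have n2: "norm (z + of_nat (Suc k)) \<ge> real k / 2"
    proof -
      have "norm (of_nat (Suc k) :: complex) \<le> norm (z + of_nat (Suc k)) + norm z"
        using norm_triangle_ineq4[of "z + of_nat (Suc k)" z] by simp
      moreover have "norm (of_nat (Suc k) :: complex) = real (Suc k)" by (rule norm_of_nat)
      ultimately show ?thesis using N k by simp
    qed
    have kp: "real k / 2 > 0" using k by simp
    have nz1: "z + of_nat k \<noteq> 0" using n1 kp by auto
    have nz2: "z + of_nat (Suc k) \<noteq> 0" using n2 kp by auto
    have "1 / (z + of_nat (Suc k)) - 1 / (z + of_nat k) = - 1 / ((z + of_nat k) * (z + of_nat (Suc k)))"
      using nz1 nz2 by (simp add: field_simps)
    then have "norm (1 / (z + of_nat (Suc k)) - 1 / (z + of_nat k)) = 1 / (norm (z + of_nat k) * norm (z + of_nat (Suc k)))"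
      by (simp add: norm_mult norm_divide)
    also have "\<dots> \<le> 1 / ((real k / 2) * (real k / 2))"
      using n1 n2 kp by (intro divide_left_mono mult_mono mult_pos_pos) auto
    also have "\<dots> = 4 * inverse (real k ^ 2)" by (simp add: field_simps power2_eq_square)
    finally show ?case by simp
  qed
qed simp



definition A :: "complex \<Rightarrow> complex \<Rightarrow> complex \<Rightarrow> nat \<Rightarrow> complex" where
  "A a b c k = pochhammer a k * pochhammer b k / (pochhammer c k * of_nat (fact k))"

definition F :: "complex \<Rightarrow> complex \<Rightarrow> complex \<Rightarrow> complex" where
  "F a b c = suminf (A a b c)"

lemma idn: fixes x z a b t :: complex
  assumes "x + z \<noteq> 0" "z + 1 \<noteq> 0"
  shows "x*(x-a-b)*t - (x-a)*(x-b)*(t*(x*(1/(x+z)))) = x*(z*t - (z+1)*(t*((a+z)*(b+z)/((x+z)*(z+1)))))"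
proof -
  have "x*(x-a-b)*t - (x-a)*(x-b)*(t*(x*(1/(x+z)))) = x*t*((x-a-b)*(x+z) - (x-a)*(x-b))/(x+z)"
    using assms by (simp add: field_simps)
  also have "(x-a-b)*(x+z) - (x-a)*(x-b) = z*(x+z) - (a+z)*(b+z)" by (simp add: algebra_simps)
  also have "(z+1)*(t*((a+z)*(b+z)/((x+z)*(z+1)))) = t*(a+z)*(b+z)/(x+z)"
    using assms by simp
  moreover have "x*t*(z*(x+z) - (a+z)*(b+z))/(x+z) = x*(z*t - t*(a+z)*(b+z)/(x+z))"
    using assms by (simp add: field_simps)
  ultimately show ?thesis by simp
qed

lemma np_shift: "(x::complex) \<notin> \<int>\<^sub>\<le>\<^sub>0 \<Longrightarrow> x + of_nat n \<notin> \<int>\<^sub>\<le>\<^sub>0"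
  using nonpos_Ints_diff_Nats[of "x + of_nat n" "of_nat n"] by auto

lemma np_nz: "(x::complex) \<notin> \<int>\<^sub>\<le>\<^sub>0 \<Longrightarrow> x + of_nat n \<noteq> 0"
  using plus_of_nat_eq_0_imp by blast

lemma np_poch: "(x::complex) \<notin> \<int>\<^sub>\<le>\<^sub>0 \<Longrightarrow> pochhammer x k \<noteq> 0"
  by (auto simp: pochhammer_eq_0_iff dest: plus_of_nat_eq_0_imp)

lemma A_0 [simp]: "A a b c 0 = 1"
  by (simp add: A_def)

lemma A_Suc:
  assumes "x \<notin> \<int>\<^sub>\<le>\<^sub>0"
  shows "A a b x (Suc k) = A a b x k * ((a + of_nat k) * (b + of_nat k) / ((x + of_nat k) * (of_nat k + 1)))"
  using np_poch[OF assms, of k] np_nz[OF assms, of k]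
  by (simp add: A_def pochhammer_rec' field_simps)

lemma A_shift_c:
  assumes "x \<notin> \<int>\<^sub>\<le>\<^sub>0"
  shows "A a b (x + 1) k = A a b x k * (x * (1 / (x + of_nat k)))"
proof -
  have e: "x * pochhammer (x+1) k = (x + of_nat k) * pochhammer x k"
    using pochhammer_rec[of x k] pochhammer_rec'[of x k] by simp
  have x0: "x \<noteq> 0" using np_nz[OF assms, of 0] by simp
  have p1: "pochhammer (x+1) k \<noteq> 0" using np_poch[OF np_shift[OF assms, of 1]] by simp
  have e': "pochhammer (x+1) k = (x + of_nat k) * pochhammer x k / x"
    using e x0 by (simp add: field_simps)
  show ?thesis
    using np_poch[OF assms, of k] np_nz[OF assms, of k] x0
    unfolding A_def e' by (simp add: field_simps)
qed

lemma rec_step: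
  assumes s: "summable (A a b x)" and x: "x \<notin> \<int>\<^sub>\<le>\<^sub>0"
  shows "summable (A a b (x + 1))" "x * (x - a - b) * F a b x = (x - a) * (x - b) * F a b (x + 1)"
proof -
  have eqA: "A a b (x + 1) = (\<lambda>k. A a b x k * (x * (1 / (x + of_nat k))))"
    using A_shift_c[OF x] by auto
  have bv: "BV (\<lambda>k. x * (1 / (x + of_nat k)))" by (intro BV_cmult BV_inv)
  show s1: "summable (A a b (x + 1))"
    unfolding eqA using abel_test[OF s bv[unfolded BV_def]] .
  define D where "D k = of_nat k * A a b x k" for k
  have x0: "x \<noteq> 0" using np_nz[OF x, of 0] by simp
  have pw: "x * (x - a - b) * A a b x k - (x - a) * (x - b) * A a b (x + 1) k = x * (D k - D (Suc k))" for k
  proof -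
    have nz: "x + of_nat k \<noteq> 0" using np_nz[OF x] .
    have nz2: "(of_nat k + 1 :: complex) \<noteq> 0" by (metis of_nat_Suc of_nat_eq_0_iff Suc_neq_Zero add.commute)
    have Dk: "D k = of_nat k * A a b x k" by (simp add: D_def)
    have DS: "D (Suc k) = (of_nat k + 1) * (A a b x k * ((a + of_nat k) * (b + of_nat k) / ((x + of_nat k) * (of_nat k + 1))))"
      by (simp add: D_def A_Suc[OF x] add.commute)
    show ?thesis unfolding Dk DS A_shift_c[OF x] by (rule idn[OF nz nz2])
  qed
  define L where "L = x * (x - a - b) * F a b x - (x - a) * (x - b) * F a b (x + 1)"
  have "(\<lambda>N. \<Sum>k<N. x * (x - a - b) * A a b x k - (x - a) * (x - b) * A a b (x + 1) k) \<longlonglongrightarrow> L"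
  proof -
    have "(\<lambda>k. x * (x - a - b) * A a b x k - (x - a) * (x - b) * A a b (x + 1) k) sums L"
      unfolding L_def F_def
      by (intro sums_diff sums_mult summable_sums s s1)
    then show ?thesis by (simp add: sums_def)
  qed
  moreover have "(\<Sum>k<N. x * (x - a - b) * A a b x k - (x - a) * (x - b) * A a b (x + 1) k) = - x * D N" for N
    unfolding pw sum_distrib_left[symmetric] sum_lessThan_telescope' by (simp add: D_def)
  ultimately have "(\<lambda>N. - x * D N) \<longlonglongrightarrow> L" by simp
  then have "(\<lambda>N. (- 1 / x) * (- x * D N)) \<longlonglongrightarrow> (- 1 / x) * L" by (intro tendsto_intros)
  then have "D \<longlonglongrightarrow> (- 1 / x) * L" using x0 by (simp add: field_simps)
  then have "(- 1 / x) * L = 0" using summable_lim_zero[OF s] unfolding D_def by blast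
  then have "L = 0" using x0 by simp
  then show "x * (x - a - b) * F a b x = (x - a) * (x - b) * F a b (x + 1)" unfolding L_def by simp
qed

lemma iter:
  assumes s: "summable (A a b c)" and c: "c \<notin> \<int>\<^sub>\<le>\<^sub>0"
  shows "summable (A a b (c + of_nat n)) \<and>
    F a b c * pochhammer c n * pochhammer (c - a - b) n = pochhammer (c - a) n * pochhammer (c - b) n * F a b (c + of_nat n)"
proof (induction n)
  case 0
  then show ?case using s by simp
next
  case (Suc n)
  define x where "x = c + of_nat n"
  have x: "x \<notin> \<int>\<^sub>\<le>\<^sub>0" unfolding x_def using np_shift[OF c] .
  have sx: "summable (A a b x)" using Suc x_def by simp
  note r = rec_step[OF sx x]
  have cs: "c + of_nat (Suc n) = x + 1" by (simp add: x_def)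
  have IH: "F a b c * pochhammer c n * pochhammer (c - a - b) n = pochhammer (c - a) n * pochhammer (c - b) n * F a b x"
    using Suc x_def by simp
  have "F a b c * pochhammer c (Suc n) * pochhammer (c - a - b) (Suc n)
      = (F a b c * pochhammer c n * pochhammer (c - a - b) n) * (x * (x - a - b))"
    by (simp add: pochhammer_rec' x_def algebra_simps)
  also have "\<dots> = pochhammer (c - a) n * pochhammer (c - b) n * (x * (x - a - b) * F a b x)"
    unfolding IH by (simp add: algebra_simps)
  also have "\<dots> = pochhammer (c - a) n * pochhammer (c - b) n * ((x - a) * (x - b) * F a b (x + 1))"
    using r(2) by simp
  also have "\<dots> = pochhammer (c - a) (Suc n) * pochhammer (c - b) (Suc n) * F a b (x + 1)"
    by (simp add: pochhammer_rec' x_def algebra_simps)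
  finally have eq: "F a b c * pochhammer c (Suc n) * pochhammer (c - a - b) (Suc n) =
    pochhammer (c - a) (Suc n) * pochhammer (c - b) (Suc n) * F a b (x + 1)" .
  show ?case unfolding cs using r(1) eq by simp
qed



lemma poly_ineq:
  fixes p q k R :: real
  assumes "p \<ge> 0" "q \<ge> 0" "k \<ge> 0" "R \<ge> 4 * (p + 1) * (q + 1)"
  shows "(p + k) * (q + k) * (k + 2)^2 \<le> (k + 1)^2 * ((R + k) * (k + 1))"
proof -
  have pq: "p * q \<ge> 0" using assms by simp
  have R: "R \<ge> 4 * (p * q) + 4 * p + 4 * q + 4" using assms(4) by (simp add: algebra_simps)
  have e: "(k + 1)^2 * ((R + k) * (k + 1)) - (p + k) * (q + k) * (k + 2)^2 =
     (R - p - q - 1) * k^3 + (3*R - p*q - 4*p - 4*q - 1) * k^2 + (3*R + 1 - 4*(p*q) - 4*p - 4*q) * k + (R - 4*(p*q))"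
    by (simp add: algebra_simps power2_eq_square power3_eq_cube)
  have c3: "R - p - q - 1 \<ge> 0" using R pq assms by linarith
  have c2: "3*R - p*q - 4*p - 4*q - 1 \<ge> 0" using R pq assms by linarith
  have c1: "3*R + 1 - 4*(p*q) - 4*p - 4*q \<ge> 0" using R pq assms by linarith
  have "(R - p - q - 1) * k^3 \<ge> 0" using c3 assms by simp
  moreover have "(3*R - p*q - 4*p - 4*q - 1) * k^2 \<ge> 0" using c2 by simp
  moreover have "(3*R + 1 - 4*(p*q) - 4*p - 4*q) * k \<ge> 0" using c1 assms by simp
  moreover have "R - 4*(p*q) \<ge> 0" using R assms by linarith
  ultimately show ?thesis using e by linarith
qed

lemma frac_cmp: "(Q::real) > 0 \<Longrightarrow> T > 0 \<Longrightarrow> P * T \<le> S * Q \<Longrightarrow> P / Q \<le> S / T"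
  by (simp add: field_simps)

lemma Re_pos_np: "Re (x::complex) > 0 \<Longrightarrow> x \<notin> \<int>\<^sub>\<le>\<^sub>0"
  by (auto elim!: nonpos_Ints_cases')

lemma norm_mono_shift:
  fixes z :: complex and s t :: real
  assumes "Re z \<ge> 0" "0 \<le> s" "s \<le> t"
  shows "norm (z + of_real s) \<le> norm (z + of_real t)"
proof -
  have "(Re z + s)^2 \<le> (Re z + t)^2" using assms by (intro power_mono) auto
  then show ?thesis by (simp add: cmod_def)
qed

lemma A_bound:
  assumes R: "Re x \<ge> 4 * (norm a + 1) * (norm b + 1)"
  shows "norm (A a b x k) \<le> 1 / (real k + 1)^2"
proof (induction k)
  case 0
  then show ?case by simp
next
  case (Suc k)
  have "1 \<le> (norm a + 1) * (norm b + 1)" using mult_mono[of 1 "norm a + 1" 1 "norm b + 1"] by simp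
  then have xp: "Re x > 0" using R by linarith
  have x: "x \<notin> \<int>\<^sub>\<le>\<^sub>0" using Re_pos_np[OF xp] .
  have n1: "norm (a + of_nat k) \<le> norm a + real k" using norm_triangle_ineq[of a "of_nat k"] by simp
  have n2: "norm (b + of_nat k) \<le> norm b + real k" using norm_triangle_ineq[of b "of_nat k"] by simp
  have n3: "norm (x + of_nat k) \<ge> Re x + real k" using complex_Re_le_cmod[of "x + of_nat k"] by simp
  have n4: "norm (of_nat k + 1 :: complex) = real k + 1"
    by (metis norm_of_nat of_nat_Suc of_nat_1 of_nat_add add.commute)
  have pos: "Re x + real k > 0" using xp by simp
  have "norm ((a + of_nat k) * (b + of_nat k) / ((x + of_nat k) * (of_nat k + 1)))
      = norm (a + of_nat k) * norm (b + of_nat k) / (norm (x + of_nat k) * (real k + 1))"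
    by (simp add: norm_mult norm_divide n4)
  also have "\<dots> \<le> (norm a + real k) * (norm b + real k) / ((Re x + real k) * (real k + 1))"
  proof (rule frac_le)
    show "norm (a + of_nat k) * norm (b + of_nat k) \<le> (norm a + real k) * (norm b + real k)"
      using n1 n2 by (intro mult_mono) auto
    show "(Re x + real k) * (real k + 1) \<le> norm (x + of_nat k) * (real k + 1)"
      using n3 by (intro mult_right_mono) auto
    show "0 < (Re x + real k) * (real k + 1)" using pos by simp
  qed simp
  also have "\<dots> \<le> (real k + 1)^2 / (real k + 2)^2"
  proof -
    have "(norm a + real k) * (norm b + real k) * (real k + 2)^2 \<le> (real k + 1)^2 * ((Re x + real k) * (real k + 1))"
      by (rule poly_ineq) (use R in auto)
    then show ?thesis using pos by (intro frac_cmp) auto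
  qed
  finally have r: "norm ((a + of_nat k) * (b + of_nat k) / ((x + of_nat k) * (of_nat k + 1))) \<le> (real k + 1)^2 / (real k + 2)^2" .
  have "norm (A a b x (Suc k)) = norm (A a b x k) * norm ((a + of_nat k) * (b + of_nat k) / ((x + of_nat k) * (of_nat k + 1)))"
    unfolding A_Suc[OF x] by (rule norm_mult)
  also have "\<dots> \<le> 1 / (real k + 1)^2 * ((real k + 1)^2 / (real k + 2)^2)"
    using Suc.IH r by (intro mult_mono) auto
  also have "\<dots> = 1 / (real (Suc k) + 1)^2" by (simp add: field_simps)
  finally show ?case .
qed

lemma A_abs_summable:
  assumes R: "Re x \<ge> 4 * (norm a + 1) * (norm b + 1)"
  shows "summable (\<lambda>k. norm (A a b x k))"
proof (rule summable_comparison_test[OF _ summable_Suc_iff[THEN iffD2, OF inverse_power_summable[of 2, where 'a=real]]])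
  show "\<exists>N. \<forall>n\<ge>N. norm (norm (A a b x n)) \<le> inverse (real (Suc n) ^ 2)"
    using A_bound[OF R] by (auto simp: inverse_eq_divide add.commute)
qed simp



lemma poch_norm_mono:
  fixes x :: complex
  assumes "Re x \<ge> 0"
  shows "norm (pochhammer (x + 1) k) \<le> norm (pochhammer (x + of_nat n + 1) k)"
proof -
  have "norm (pochhammer (x + 1) k) = (\<Prod>i\<in>{0..<k}. norm (x + of_real (real i + 1)))"
    by (simp add: pochhammer_prod prod_norm[symmetric] add_ac)
  also have "\<dots> \<le> (\<Prod>i\<in>{0..<k}. norm (x + of_real (real n + real i + 1)))"
    by (intro prod_mono conjI norm_ge_zero norm_mono_shift) (use assms in auto)
  also have "\<dots> = norm (pochhammer (x + of_nat n + 1) k)"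
    by (simp add: pochhammer_prod prod_norm[symmetric] add_ac)
  finally show ?thesis .
qed

lemma A_shift_bound:
  fixes x :: complex
  assumes xp: "Re x > 0"
  shows "norm (A a b (x + of_nat n) (Suc k)) \<le> norm x / norm (x + of_nat n) * norm (A a b x (Suc k))"
proof -
  have x0: "x \<noteq> 0" using xp by auto
  have xn0: "x + of_nat n \<noteq> 0" using np_nz[OF Re_pos_np[OF xp]] .
  have p1: "pochhammer (x+1) k \<noteq> 0" using np_poch[OF Re_pos_np, of "x+1"] xp by simp
  have p2: "pochhammer (x + of_nat n + 1) k \<noteq> 0" using np_poch[OF Re_pos_np, of "x + of_nat n + 1"] xp by simp
  define Q where "Q = norm (pochhammer a (Suc k) * pochhammer b (Suc k))"
  define fc where "fc = real (fact (Suc k))"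
  have Q0: "Q \<ge> 0" unfolding Q_def by simp
  have fc0: "fc > 0" unfolding fc_def by (simp only: of_nat_0_less_iff fact_gt_zero)
  have nA: "norm (A a b y (Suc k)) = Q / (norm y * norm (pochhammer (y + 1) k) * fc)" for y
    unfolding A_def pochhammer_rec[of y] Q_def fc_def
    by (simp only: norm_divide norm_mult norm_of_nat)
  have "norm (A a b (x + of_nat n) (Suc k)) = Q / (norm (x + of_nat n) * norm (pochhammer (x + of_nat n + 1) k) * fc)"
    by (rule nA)
  also have "\<dots> \<le> Q / (norm (x + of_nat n) * norm (pochhammer (x + 1) k) * fc)"
    using poch_norm_mono[of x k n] xp Q0 p1 xn0 fc0
    by (intro divide_left_mono mult_right_mono mult_left_mono mult_pos_pos) auto
  also have "\<dots> = norm x / norm (x + of_nat n) * norm (A a b x (Suc k))"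
    unfolding nA using x0 by (simp add: field_simps)
  finally show ?thesis .
qed

definition R0 :: "complex \<Rightarrow> complex \<Rightarrow> real" where
  "R0 a b = 4 * (norm a + 1) * (norm b + 1)"

lemma R0_pos: "R0 a b > 0"
proof -
  have "1 \<le> (norm a + 1) * (norm b + 1)" using mult_mono[of 1 "norm a + 1" 1 "norm b + 1"] by simp
  then show ?thesis unfolding R0_def by linarith
qed

lemma tail_lim:
  assumes R: "Re x \<ge> R0 a b"
  shows "(\<lambda>n. F a b (x + of_nat n)) \<longlonglongrightarrow> 1"
proof -
  have xp: "Re x > 0" using R R0_pos[of a b] by linarith
  define S where "S = (\<Sum>k. norm (A a b x (Suc k)))"
  have sS: "summable (\<lambda>k. norm (A a b x (Suc k)))"
    using A_abs_summable[of a b x] R summable_Suc_iff[of "\<lambda>k. norm (A a b x k)"] by (simp add: R0_def)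
  have bound: "norm (F a b (x + of_nat n) - 1) \<le> norm x * S / real n" if n: "n \<ge> 1" for n
  proof -
    have Rn: "Re (x + of_nat n) \<ge> 4 * (norm a + 1) * (norm b + 1)" using R by (simp add: R0_def)
    have sn: "summable (\<lambda>k. norm (A a b (x + of_nat n) k))" using A_abs_summable[OF Rn] .
    then have sn': "summable (\<lambda>k. norm (A a b (x + of_nat n) (Suc k)))"
      using summable_Suc_iff[of "\<lambda>k. norm (A a b (x + of_nat n) k)"] by simp
    have "F a b (x + of_nat n) - 1 = (\<Sum>k. A a b (x + of_nat n) (Suc k))"
      unfolding F_def using suminf_split_head[OF summable_norm_cancel[OF sn]] by simp
    then have "norm (F a b (x + of_nat n) - 1) \<le> (\<Sum>k. norm (A a b (x + of_nat n) (Suc k)))"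
      using summable_norm[OF sn'] by simp
    also have "\<dots> \<le> (\<Sum>k. norm x / norm (x + of_nat n) * norm (A a b x (Suc k)))"
      by (intro suminf_le A_shift_bound[OF xp] sn' summable_mult sS)
    also have "\<dots> = norm x / norm (x + of_nat n) * S"
      unfolding S_def by (rule suminf_mult[OF sS])
    also have "\<dots> \<le> norm x / real n * S"
    proof -
      have "real n \<le> norm (x + of_nat n)" using complex_Re_le_cmod[of "x + of_nat n"] xp by simp
      moreover have "S \<ge> 0" unfolding S_def by (intro suminf_nonneg sS) auto
      moreover have "real n > 0" using n by simp
      ultimately show ?thesis by (intro mult_right_mono divide_left_mono mult_pos_pos) auto
    qed
    finally show ?thesis by simp
  qed
  have "(\<lambda>n. F a b (x + of_nat n) - 1) \<longlonglongrightarrow> 0"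
  proof (rule Lim_null_comparison)
    show "eventually (\<lambda>n. norm (F a b (x + of_nat n) - 1) \<le> norm x * S / real n) sequentially"
      using eventually_ge_at_top[of "1::nat"] by eventually_elim (rule bound)
    show "(\<lambda>n. norm x * S / real n) \<longlonglongrightarrow> 0" by (rule lim_const_over_n)
  qed
  then show ?thesis by (rule LIM_zero_cancel)
qed



lemma inv4: "(u::complex) * v / (x * y) = inverse x * inverse y / (inverse u * inverse v)"
  by (simp add: divide_inverse inverse_mult_distrib mult_ac)
lemma ratio_alg:
  fixes P1 P2 P3 P4 f E1 E2 E3 E4 :: complex
  assumes "f \<noteq> 0" "E1 \<noteq> 0" "E2 \<noteq> 0" "E3 \<noteq> 0" "E4 \<noteq> 0" "E1 * E2 = E3 * E4"
  shows "(P1 / (f * E1)) * (P2 / (f * E2)) / ((P3 / (f * E3)) * (P4 / (f * E4))) = P1 * P2 / (P3 * P4)"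
proof -
  define K where "K = f * f * (E1 * E2)"
  have K0: "K \<noteq> 0" using assms unfolding K_def by simp
  have l: "(P1 / (f * E1)) * (P2 / (f * E2)) = (P1 * P2) / K" unfolding K_def by (simp add: field_simps)
  have r: "(P3 / (f * E3)) * (P4 / (f * E4)) = (P3 * P4) / K" unfolding K_def using assms(6) by (simp add: field_simps)
  show ?thesis unfolding l r using K0 by simp
qed
lemma eqq: fixes F r P1 P2 P3 P4 G :: complex
  assumes "F * P3 * P4 = P1 * P2 * G" "P3 \<noteq> 0" "P4 \<noteq> 0"
  shows "F = P1 * P2 / (P3 * P4) * G"
  using assms by (simp add: field_simps)

lemma rGS_ratio:
  fixes a b c :: complex
  shows "rGamma_series (c - a) n * rGamma_series (c - b) n / (rGamma_series c n * rGamma_series (c - a - b) n)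
   = pochhammer (c - a) (n+1) * pochhammer (c - b) (n+1) / (pochhammer c (n+1) * pochhammer (c - a - b) (n+1))"
proof -
  define L where "L = (of_real (ln (of_nat n)) :: complex)"
  have e: "exp ((c - a) * L) * exp ((c - b) * L) = exp (c * L) * exp ((c - a - b) * L)"
  proof -
    have "(c - a) * L + (c - b) * L = c * L + (c - a - b) * L" by (simp add: algebra_simps)
    then show ?thesis by (simp add: exp_add[symmetric])
  qed
  show ?thesis unfolding rGamma_series_def L_def[symmetric]
    by (rule ratio_alg) (use e in auto)
qed

lemma gauss:
  assumes s: "summable (A a b c)" and c: "c \<notin> \<int>\<^sub>\<le>\<^sub>0" and cab: "c - a - b \<notin> \<int>\<^sub>\<le>\<^sub>0"
  shows "F a b c = Gamma c * Gamma (c - a - b) / (Gamma (c - a) * Gamma (c - b))"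
proof -
  obtain m :: nat where m: "real m \<ge> R0 a b - Re c" using real_arch_simple by blast
  define x where "x = c + of_nat m"
  have "Re x \<ge> R0 a b" using m by (simp add: x_def)
  from tail_lim[OF this] have "(\<lambda>n. F a b (c + of_nat (n + m))) \<longlonglongrightarrow> 1"
    by (simp add: x_def add_ac)
  then have "(\<lambda>n. F a b (c + of_nat n)) \<longlonglongrightarrow> 1" by (rule LIMSEQ_offset)
  then have lim2: "(\<lambda>n. F a b (c + of_nat (Suc n))) \<longlonglongrightarrow> 1" by (rule LIMSEQ_Suc)
  define r where "r n = rGamma_series (c - a) n * rGamma_series (c - b) n / (rGamma_series c n * rGamma_series (c - a - b) n)" for n
  define L where "L = rGamma (c - a) * rGamma (c - b) / (rGamma c * rGamma (c - a - b))"
  have rlim: "r \<longlonglongrightarrow> L"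
    unfolding r_def[abs_def] L_def
    by (intro tendsto_intros) (use c cab in \<open>simp add: rGamma_eq_zero_iff\<close>)
  have eq: "F a b c = r n * F a b (c + of_nat (Suc n))" for n
  proof -
    have it: "F a b c * pochhammer c (n+1) * pochhammer (c - a - b) (n+1) =
      pochhammer (c - a) (n+1) * pochhammer (c - b) (n+1) * F a b (c + of_nat (Suc n))"
      using iter[OF s c, of "Suc n"] by simp
    have p1: "pochhammer c (n+1) \<noteq> 0" using np_poch[OF c] .
    have p2: "pochhammer (c - a - b) (n+1) \<noteq> 0" using np_poch[OF cab] .
    show ?thesis unfolding r_def rGS_ratio by (rule eqq[OF it p1 p2])
  qed
  have "(\<lambda>n. r n * F a b (c + of_nat (Suc n))) \<longlonglongrightarrow> L * 1"
    by (intro tendsto_mult rlim lim2)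
  then have "(\<lambda>n. F a b c) \<longlonglongrightarrow> L" unfolding eq[symmetric] by simp
  then have "F a b c = L" by (simp add: LIMSEQ_const_iff)
  also have "L = Gamma c * Gamma (c - a - b) / (Gamma (c - a) * Gamma (c - b))"
    unfolding L_def Gamma_def by (rule inv4)
  finally show ?thesis .
qed



lemma kA_alg: "(n::complex) \<noteq> 0 \<Longrightarrow> n * (a*P*(b*Q)/(x*R*(n*f))) = a*b/x * (P*Q/(R*f))"
  by (cases "x*R*f = 0") (auto simp: field_simps)
lemma solve_alg: "(u1::complex) \<noteq> 0 \<Longrightarrow> v1 \<noteq> 0 \<Longrightarrow> u1 * (v1 * P) = w1*(w2*Q) \<Longrightarrow> P = w2*w1*Q / (u1 * v1)"
  by (simp add: field_simps)
lemma term_alg: "(Q::complex) \<noteq> 0 \<Longrightarrow> U \<noteq> 0 \<Longrightarrow> pc \<noteq> 0 \<Longrightarrow> f \<noteq> 0 \<Longrightarrow>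
   pa*pb*(W*Q/U)/(pc*Q)*1^k/f = pa*pb/(pc*f)*(W/U)"
  by (simp add: field_simps)

lemma term_eq:
  assumes d: "d \<notin> \<int>\<^sub>\<le>\<^sub>0" and c: "c + 1 \<notin> \<int>\<^sub>\<le>\<^sub>0"
  shows "hyp3F2_term a b (d + 2) (c + 1) d 1 k = A a b (c + 1) k * ((d + of_nat k) * (d + of_nat k + 1) / (d * (d + 1)))"
proof -
  have d0: "d \<noteq> 0" using np_nz[OF d, of 0] by simp
  have d1: "d + 1 \<noteq> 0" using np_nz[OF d, of 1] by simp
  have pdk: "pochhammer d k \<noteq> 0" using np_poch[OF d] .
  have pck: "pochhammer (c + 1) k \<noteq> 0" using np_poch[OF c] .
  have e1: "pochhammer d (Suc (Suc k)) = d * ((d + 1) * pochhammer (d + 2) k)"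
    by (simp add: pochhammer_rec add.assoc one_add_one)
  have e2: "pochhammer d (Suc (Suc k)) = (d + of_nat k + 1) * ((d + of_nat k) * pochhammer d k)"
    by (simp add: pochhammer_rec' add_ac)
  have e3: "d * ((d + 1) * pochhammer (d + 2) k) = (d + of_nat k + 1) * ((d + of_nat k) * pochhammer d k)"
    by (metis e1 e2)
  have pd: "pochhammer (d + 2) k = (d + of_nat k) * (d + of_nat k + 1) * pochhammer d k / (d * (d + 1))"
    by (rule solve_alg[OF d0 d1 e3])
  show ?thesis unfolding hyp3F2_term_def A_def pd
    by (rule term_alg) (use d0 d1 pdk pck in auto)
qed

lemma kA:
  assumes x: "x \<notin> \<int>\<^sub>\<le>\<^sub>0"
  shows "of_nat (Suc j) * A a b x (Suc j) = a * b / x * A (a + 1) (b + 1) (x + 1) j"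
proof -
  have x0: "x \<noteq> 0" using np_nz[OF x, of 0] by simp
  have p: "pochhammer (x + 1) j \<noteq> 0" using np_poch[OF np_shift[OF x, of 1]] by simp
  show ?thesis unfolding A_def pochhammer_rec[of a] pochhammer_rec[of b] pochhammer_rec[of x] fact_Suc of_nat_id of_nat_mult
    by (rule kA_alg) (simp only: of_nat_eq_0_iff Suc_neq_Zero not_False_eq_True)
qed

lemma np_minus1:
  assumes "z \<notin> \<int>\<^sub>\<le>\<^sub>0" "z - 1 \<noteq> 0"
  shows "(z::complex) - 1 \<notin> \<int>\<^sub>\<le>\<^sub>0"
proof
  assume "z - 1 \<in> \<int>\<^sub>\<le>\<^sub>0"
  then obtain n where n: "z - 1 = - of_nat n" by (elim nonpos_Ints_cases')
  show False
  proof (cases n)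
    case 0 then show False using n assms(2) by simp
  next
    case (Suc m)
    then have "z + of_nat m = 0" using n by (simp add: algebra_simps)
    then show False using plus_of_nat_eq_0_imp assms(1) by blast
  qed
qed



lemma final_alg:
  fixes g e e1 gm D a b c1 c2 d dd :: complex
  assumes "c1 \<noteq> 0" "c2 \<noteq> 0" "d \<noteq> 0" "dd \<noteq> 0" "e1 \<noteq> 0" "D \<noteq> 0"
  shows "g*(e*(e1*gm))/D + 2/d*(a*b/c1 * (c1*g*(e1*gm)/D)) + 1/dd*(a*b/c1*((a+1)*(b+1)/c2) * (c2*(c1*g)*gm/D))
     = g*(e1*gm)/D * (e + 2*a*b/d + a*b*(a+1)*(b+1)/(dd*e1))"
  using assms by (simp add: field_simps)

lemma P_dec:
  fixes d z :: complex
  assumes "d \<noteq> 0" "d + 1 \<noteq> 0"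
  shows "(d + z) * (d + z + 1) / (d * (d + 1)) = 1 + 2 / d * z + 1 / (d * (d + 1)) * (z * (z - 1))"
proof -
  have e: "(d + z) * (d + z + 1) = d * (d + 1) + 2 * (d + 1) * z + z * (z - 1)" by (simp add: algebra_simps)
  have a1: "d * (d + 1) / (d * (d + 1)) = 1" using assms by simp
  have a2: "2 * (d + 1) * z / (d * (d + 1)) = 2 / d * z"
  proof -
    have "2 * (d + 1) * z / (d * (d + 1)) = ((d + 1) * (2 * z)) / ((d + 1) * d)" by (simp only: mult_ac)
    also have "\<dots> = 2 * z / d" using assms(2) by (rule mult_divide_mult_cancel_left)
    finally show ?thesis by simp
  qed
  show ?thesis unfolding e add_divide_distrib a1 a2 by simp
qed

lemma xy1: "(X::complex) \<noteq> 0 \<Longrightarrow> Y \<noteq> 0 \<Longrightarrow> X / Y * (Y * (1 / X)) = 1"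
  by simp
lemma xyz: "(X::complex) \<noteq> 0 \<Longrightarrow> Y \<noteq> 0 \<Longrightarrow> X / Y * (Y * (z / X)) = z"
  by simp
lemma ring_dec: "(t::complex) * (1 + p * z + q * (z * (z - 1))) = t + p * (z * t) + q * (z * (z - 1) * t)"
  by (simp add: algebra_simps)

lemma inv_P:
  fixes d z :: complex
  assumes "d \<noteq> 0" "d + 1 \<noteq> 0" "d + z \<noteq> 0" "d + z + 1 \<noteq> 0"
  shows "(d + z) * (d + z + 1) / (d * (d + 1)) * (d * (d + 1) * (1 / (d + z) + - 1 * (1 / (d + z + 1)))) = 1"
    and "(d + z) * (d + z + 1) / (d * (d + 1)) * (d * (d + 1) * ((d + 1) * (1 / (d + z + 1)) + - d * (1 / (d + z)))) = z"
proof -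
  have e1: "1 / (d + z) + - 1 * (1 / (d + z + 1)) = 1 / ((d + z) * (d + z + 1))"
    using assms by (simp add: field_simps)
  have e2: "(d + 1) * (1 / (d + z + 1)) + - d * (1 / (d + z)) = z / ((d + z) * (d + z + 1))"
    using assms by (simp add: field_simps)
  show "(d + z) * (d + z + 1) / (d * (d + 1)) * (d * (d + 1) * (1 / (d + z) + - 1 * (1 / (d + z + 1)))) = 1"
    unfolding e1 by (rule xy1) (use assms in auto)
  show "(d + z) * (d + z + 1) / (d * (d + 1)) * (d * (d + 1) * ((d + 1) * (1 / (d + z + 1)) + - d * (1 / (d + z)))) = z"
    unfolding e2 by (rule xyz) (use assms in auto)
qed

theorem mainTheorem6:
  fixes a b c d :: complex
  assumes conv: "summable (hyp3F2_term a b (d + 2) (c + 1) d 1)"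
    and den_c: "c + 1 \<notin> \<int>\<^sub>\<le>\<^sub>0"
    and den_d: "d \<notin> \<int>\<^sub>\<le>\<^sub>0"
    and g1: "c - a - b \<notin> \<int>\<^sub>\<le>\<^sub>0"
    and g2: "c - a + 1 \<notin> \<int>\<^sub>\<le>\<^sub>0"
    and g3: "c - b + 1 \<notin> \<int>\<^sub>\<le>\<^sub>0"
    and nz: "c - a - b - 1 \<noteq> 0"
  shows "hyp3F2 a b (d + 2) (c + 1) d 1 =
    Gamma (c + 1) * Gamma (c - a - b) / (Gamma (c - a + 1) * Gamma (c - b + 1)) *
    ((c - a - b) + 2 * a * b / d
       + a * b * (a + 1) * (b + 1) / (d * (d + 1) * (c - a - b - 1)))"
proof -
  define s where "s = hyp3F2_term a b (d + 2) (c + 1) d 1"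
  define t where "t = A a b (c + 1)"
  define u where "u k = of_nat k * t k" for k
  define v where "v k = of_nat k * (of_nat k - 1) * t k" for k
  define P where "P k = (d + of_nat k) * (d + of_nat k + 1) / (d * (d + 1))" for k
  define \<gamma> where "\<gamma> k = 1 / (d + of_nat k)" for k
  have d0: "d \<noteq> 0" using np_nz[OF den_d, of 0] by simp
  have d1: "d + 1 \<noteq> 0" using np_nz[OF den_d, of 1] by simp
  have dk: "d + of_nat k \<noteq> 0" for k using np_nz[OF den_d] .
  have dk1: "d + of_nat k + 1 \<noteq> 0" for k using np_nz[OF den_d, of "Suc k"] by (simp add: add_ac)
  have gS: "\<gamma> (Suc k) = 1 / (d + of_nat k + 1)" for k by (simp add: \<gamma>_def add_ac)
  have sP: "s k = t k * P k" for k
    unfolding s_def t_def P_def by (rule term_eq[OF den_d den_c])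
  have ss: "summable s" using conv s_def by simp
  have bv\<gamma>: "BV \<gamma>" unfolding \<gamma>_def by (rule BV_inv)
  have bv1: "BV (\<lambda>k. d * (d + 1) * (\<gamma> k + - 1 * \<gamma> (Suc k)))"
    by (intro BV_cmult BV_add BV_shift bv\<gamma>)
  have bv2: "BV (\<lambda>k. d * (d + 1) * ((d + 1) * \<gamma> (Suc k) + - d * \<gamma> k))"
    by (intro BV_cmult BV_add BV_shift bv\<gamma>)
  have t_eq: "t = (\<lambda>k. s k * (d * (d + 1) * (\<gamma> k + - 1 * \<gamma> (Suc k))))"
  proof
    fix k
    have "s k * (d * (d + 1) * (\<gamma> k + - 1 * \<gamma> (Suc k))) = t k * (P k * (d * (d + 1) * (\<gamma> k + - 1 * \<gamma> (Suc k))))"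
      unfolding sP by simp
    also have "P k * (d * (d + 1) * (\<gamma> k + - 1 * \<gamma> (Suc k))) = 1"
      unfolding P_def gS unfolding \<gamma>_def by (rule inv_P(1)[OF d0 d1 dk dk1])
    finally show "t k = s k * (d * (d + 1) * (\<gamma> k + - 1 * \<gamma> (Suc k)))" by simp
  qed
  have u_eq: "u = (\<lambda>k. s k * (d * (d + 1) * ((d + 1) * \<gamma> (Suc k) + - d * \<gamma> k)))"
  proof
    fix k
    have "s k * (d * (d + 1) * ((d + 1) * \<gamma> (Suc k) + - d * \<gamma> k)) = t k * (P k * (d * (d + 1) * ((d + 1) * \<gamma> (Suc k) + - d * \<gamma> k)))"
      unfolding sP by simp
    also have "P k * (d * (d + 1) * ((d + 1) * \<gamma> (Suc k) + - d * \<gamma> k)) = of_nat k"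
      unfolding P_def gS unfolding \<gamma>_def by (rule inv_P(2)[OF d0 d1 dk dk1])
    finally show "u k = s k * (d * (d + 1) * ((d + 1) * \<gamma> (Suc k) + - d * \<gamma> k))" by (simp add: u_def)
  qed
  have st: "summable t" unfolding t_eq by (rule abel_test[OF ss bv1[unfolded BV_def]])
  have su: "summable u" unfolding u_eq by (rule abel_test[OF ss bv2[unfolded BV_def]])
  have s_dec: "s k = t k + 2 / d * u k + 1 / (d * (d + 1)) * v k" for k
  proof -
    have "P k = 1 + 2 / d * of_nat k + 1 / (d * (d + 1)) * (of_nat k * (of_nat k - 1))"
      unfolding P_def by (rule P_dec[OF d0 d1])
    then show ?thesis unfolding sP u_def v_def by (simp only: ring_dec)
  qed
  have v_eq: "v = (\<lambda>k. d * (d + 1) * (s k - t k - 2 / d * u k))"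
  proof
    fix k
    have "s k - t k - 2 / d * u k = 1 / (d * (d + 1)) * v k" unfolding s_dec by simp
    moreover have "d * (d + 1) * (1 / (d * (d + 1)) * v k) = v k" using d0 d1 by simp
    ultimately show "v k = d * (d + 1) * (s k - t k - 2 / d * u k)" by simp
  qed
  have sv: "summable v" unfolding v_eq by (intro summable_mult summable_diff ss st su)
  define x2 where "x2 = c + 1 + 1"
  define x3 where "x3 = x2 + 1"
  have np2: "x2 \<notin> \<int>\<^sub>\<le>\<^sub>0" unfolding x2_def using np_shift[OF den_c, of 1] by simp
  have np3: "x3 \<notin> \<int>\<^sub>\<le>\<^sub>0" unfolding x3_def using np_shift[OF np2, of 1] by simp
  have gm1: "c - a - b - 1 \<notin> \<int>\<^sub>\<le>\<^sub>0" by (rule np_minus1[OF g1 nz])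
  have c10: "c + 1 \<noteq> 0" using np_nz[OF den_c, of 0] by simp
  have x20: "x2 \<noteq> 0" using np_nz[OF np2, of 0] by simp
  define gg1 where "gg1 = Gamma (c + 1) * Gamma (c + 1 - a - b) / (Gamma (c + 1 - a) * Gamma (c + 1 - b))"
  define gg2 where "gg2 = Gamma x2 * Gamma (x2 - (a + 1) - (b + 1)) / (Gamma (x2 - (a + 1)) * Gamma (x2 - (b + 1)))"
  define gg3 where "gg3 = Gamma x3 * Gamma (x3 - (a + 1 + 1) - (b + 1 + 1)) / (Gamma (x3 - (a + 1 + 1)) * Gamma (x3 - (b + 1 + 1)))"
  define K where "K = a * b / (c + 1)"
  define K' where "K' = K * ((a + 1) * (b + 1) / x2)"
  have tsum: "t sums gg1"
  proof -
    have "c + 1 - a - b \<notin> \<int>\<^sub>\<le>\<^sub>0" using np_shift[OF g1, of 1] by (simp add: algebra_simps)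
    then have "F a b (c + 1) = gg1" unfolding gg1_def using gauss[OF st[unfolded t_def] den_c] by simp
    then show ?thesis using summable_sums[OF st] unfolding F_def t_def by simp
  qed
  have uS: "u (Suc j) = K * A (a + 1) (b + 1) x2 j" for j
    unfolding u_def t_def K_def x2_def by (rule kA[OF den_c])
  have usum: "u sums (K * gg2)"
  proof (cases "K = 0")
    case True
    have "u k = 0" for k
    proof (cases k)
      case 0 then show ?thesis by (simp add: u_def)
    next
      case (Suc k') then show ?thesis using uS True by simp
    qed
    then have "u = (\<lambda>_. 0)" by auto
    then show ?thesis using True by simp
  next
    case False
    have "summable (\<lambda>j. u (Suc j))" using su summable_Suc_iff by blast
    then have sA: "summable (A (a + 1) (b + 1) x2)" unfolding uS using False by simp
    have eq2: "x2 - (a + 1) - (b + 1) = c - a - b" unfolding x2_def by simp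
    have "x2 - (a + 1) - (b + 1) \<notin> \<int>\<^sub>\<le>\<^sub>0" unfolding eq2 by (rule g1)
    then have "F (a + 1) (b + 1) x2 = gg2" unfolding gg2_def by (rule gauss[OF sA np2])
    then have "(\<lambda>j. u (Suc j)) sums (K * gg2)" unfolding uS
      using sums_mult[OF summable_sums[OF sA], of K] unfolding F_def by simp
    then show ?thesis using sums_Suc_iff[of u] by (simp add: u_def)
  qed
  have vSS: "v (Suc (Suc j)) = K' * A (a + 1 + 1) (b + 1 + 1) x3 j" for j
  proof -
    have "v (Suc (Suc j)) = of_nat (Suc j) * u (Suc (Suc j))"
      unfolding v_def u_def by (simp add: algebra_simps)
    also have "\<dots> = K * (of_nat (Suc j) * A (a + 1) (b + 1) x2 (Suc j))" unfolding uS by simp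
    also have "\<dots> = K' * A (a + 1 + 1) (b + 1 + 1) x3 j"
      unfolding kA[OF np2] K'_def x3_def by simp
    finally show ?thesis .
  qed
  have v0: "v 0 = 0" and v1: "v (Suc 0) = 0" by (simp_all add: v_def)
  have vsum: "v sums (K' * gg3)"
  proof (cases "K' = 0")
    case True
    have "v k = 0" for k
    proof (cases k)
      case 0 then show ?thesis using v0 by simp
    next
      case (Suc k') then show ?thesis using v1 vSS True by (cases k') auto
    qed
    then have "v = (\<lambda>_. 0)" by auto
    then show ?thesis using True by simp
  next
    case False
    have "summable (\<lambda>j. v (Suc (Suc j)))" using sv summable_Suc_iff[of v] summable_Suc_iff[of "\<lambda>j. v (Suc j)"] by blast
    then have sA: "summable (A (a + 1 + 1) (b + 1 + 1) x3)" unfolding vSS using False by simp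
    have eq3: "x3 - (a + 1 + 1) - (b + 1 + 1) = c - a - b - 1" unfolding x3_def x2_def by simp
    have "x3 - (a + 1 + 1) - (b + 1 + 1) \<notin> \<int>\<^sub>\<le>\<^sub>0" unfolding eq3 by (rule gm1)
    then have "F (a + 1 + 1) (b + 1 + 1) x3 = gg3" unfolding gg3_def by (rule gauss[OF sA np3])
    then have "(\<lambda>j. v (Suc (Suc j))) sums (K' * gg3)" unfolding vSS
      using sums_mult[OF summable_sums[OF sA], of K'] unfolding F_def by simp
    then have "(\<lambda>j. v (Suc j)) sums (K' * gg3)" using sums_Suc_iff[of "\<lambda>j. v (Suc j)"] v1 by simp
    then show ?thesis using sums_Suc_iff[of v] v0 by simp
  qed
  have "s sums (gg1 + 2 / d * (K * gg2) + 1 / (d * (d + 1)) * (K' * gg3))"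
  proof -
    have "(\<lambda>k. t k + 2 / d * u k + 1 / (d * (d + 1)) * v k) sums (gg1 + 2 / d * (K * gg2) + 1 / (d * (d + 1)) * (K' * gg3))"
      by (intro sums_add sums_mult tsum usum vsum)
    then show ?thesis unfolding s_dec[symmetric] by simp
  qed
  then have main: "hyp3F2 a b (d + 2) (c + 1) d 1 = gg1 + 2 / d * (K * gg2) + 1 / (d * (d + 1)) * (K' * gg3)"
    unfolding hyp3F2_def s_def[symmetric] by (rule sums_unique[symmetric])
  define g where "g = Gamma (c + 1)"
  define gm where "gm = Gamma (c - a - b - 1)"
  define D where "D = Gamma (c - a + 1) * Gamma (c - b + 1)"
  have D0: "D \<noteq> 0" unfolding D_def using g2 g3 by (simp add: Gamma_eq_zero_iff)
  have Gab: "Gamma (c - a - b) = (c - a - b - 1) * gm"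
    using Gamma_plus1[OF gm1] unfolding gm_def by simp
  have G1: "gg1 = g * ((c - a - b) * ((c - a - b - 1) * gm)) / D"
  proof -
    have e1: "c + 1 - a - b = (c - a - b) + 1" by (simp add: algebra_simps)
    have h: "Gamma (c + 1 - a - b) = (c - a - b) * ((c - a - b - 1) * gm)"
      unfolding e1 Gamma_plus1[OF g1] Gab ..
    have e2: "c + 1 - a = c - a + 1" and e3: "c + 1 - b = c - b + 1" by (simp_all add: algebra_simps)
    show ?thesis unfolding gg1_def g_def D_def h unfolding e2 e3 ..
  qed
  have G2: "gg2 = (c + 1) * g * ((c - a - b - 1) * gm) / D"
  proof -
    have h: "Gamma x2 = (c + 1) * g" unfolding x2_def g_def using Gamma_plus1[OF den_c] .
    have e1: "x2 - (a + 1) - (b + 1) = c - a - b" and e2: "x2 - (a + 1) = c - a + 1" and e3: "x2 - (b + 1) = c - b + 1"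
      unfolding x2_def by (simp_all add: algebra_simps)
    show ?thesis unfolding gg2_def D_def h e1 Gab unfolding e2 e3 ..
  qed
  have G3: "gg3 = x2 * ((c + 1) * g) * gm / D"
  proof -
    have h: "Gamma x3 = x2 * ((c + 1) * g)" unfolding x3_def
      using Gamma_plus1[OF np2] Gamma_plus1[OF den_c] by (simp add: x2_def g_def)
    have e1: "x3 - (a + 1 + 1) - (b + 1 + 1) = c - a - b - 1" and e2: "x3 - (a + 1 + 1) = c - a + 1" and e3: "x3 - (b + 1 + 1) = c - b + 1"
      unfolding x3_def x2_def by (simp_all add: algebra_simps)
    show ?thesis unfolding gg3_def D_def h e1 gm_def unfolding e2 e3 ..
  qed
  have dd0: "d * (d + 1) \<noteq> 0" using d0 d1 by simp
  have "hyp3F2 a b (d + 2) (c + 1) d 1 = g * ((c - a - b - 1) * gm) / D *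
     ((c - a - b) + 2 * a * b / d + a * b * (a + 1) * (b + 1) / (d * (d + 1) * (c - a - b - 1)))"
    unfolding main G1 G2 G3 K'_def K_def by (rule final_alg[OF c10 x20 d0 dd0 nz D0])
  then show ?thesis unfolding g_def D_def Gab[symmetric] by simp
qed


end
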